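(* Let $G$ be a graph of order $n$, not isomorphic to the complete graph $K_n$, such that $\tau(G)=\tau>\frac{n}{2}$. Then $\tau\le\beta_p(G)\le\frac{n+\tau}{2}$. Moreover, if $W$ is its $\tau$-set, then (1) $\beta_p(G)=\tau$ if and only if $G[W]\cong\overline{K_\tau}$; and (2) $\tau<\beta_p(G)\le\frac{n+\tau}{2}$ if and only if $G[W]\cong K_\tau$.
   Context: All graphs are finite, simple, undirected and connected. Two vertices $u,v$ are twins if $N(u)\setminus\{v\}=N(v)\setminus\{u\}$; twin classes are the equivalence classes of this relation, and the twin number $\tau(G)$ is the maximum cardinality of a twin class. A twin set is a set of pairwise twin vertices; a $\tau$-set is a twin set of cardinality $\tau(G)$ (it is unique when $\tau(G)>n/2$). $G[W]$ is the induced subgraph. For a partition $\Pi=\{S_1,\dots,S_k\}$ of $V(G)$, $r(u|\Pi)=(d(u,S_1),\dots,d(u,S_k))$ with $d(u,S)=\min_{w\in S}d(u,w)$; $\Pi$ is locating if $r(u|\Pi)\ne r(v|\Pi)$ for all distinct $u,v$; $\beta_p(G)$ is the minimum size of a locating partition. *)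

theory Defs
  imports Complex_Main
begin

definition graph :: "'a set \<Rightarrow> ('a \<Rightarrow> 'a \<Rightarrow> bool) \<Rightarrow> bool" where
  "graph V E \<longleftrightarrow> finite V \<and> V \<noteq> {} \<and>
     (\<forall>u v. E u v \<longrightarrow> u \<in> V \<and> v \<in> V) \<and>
     (\<forall>u v. E u v \<longrightarrow> E v u) \<and> (\<forall>u. \<not> E u u)"

definition connected_graph :: "'a set \<Rightarrow> ('a \<Rightarrow> 'a \<Rightarrow> bool) \<Rightarrow> bool" where
  "connected_graph V E \<longleftrightarrow> graph V E \<and> (\<forall>u\<in>V. \<forall>v\<in>V. E\<^sup>*\<^sup>* u v)"

definition gdist :: "('a \<Rightarrow> 'a \<Rightarrow> bool) \<Rightarrow> 'a \<Rightarrow> 'a \<Rightarrow> nat" where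
  "gdist E u v = (LEAST k. (E ^^ k) u v)"

definition setdist :: "('a \<Rightarrow> 'a \<Rightarrow> bool) \<Rightarrow> 'a \<Rightarrow> 'a set \<Rightarrow> nat" where
  "setdist E u S = Min (gdist E u ` S)"

definition nbhd :: "('a \<Rightarrow> 'a \<Rightarrow> bool) \<Rightarrow> 'a \<Rightarrow> 'a set" where
  "nbhd E u = {w. E u w}"

definition twins :: "('a \<Rightarrow> 'a \<Rightarrow> bool) \<Rightarrow> 'a \<Rightarrow> 'a \<Rightarrow> bool" where
  "twins E u v \<longleftrightarrow> nbhd E u - {v} = nbhd E v - {u}"

definition twin_class :: "'a set \<Rightarrow> ('a \<Rightarrow> 'a \<Rightarrow> bool) \<Rightarrow> 'a \<Rightarrow> 'a set" where
  "twin_class V E u = {v \<in> V. twins E u v}"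

definition twin_number :: "'a set \<Rightarrow> ('a \<Rightarrow> 'a \<Rightarrow> bool) \<Rightarrow> nat" where
  "twin_number V E = Max ((\<lambda>u. card (twin_class V E u)) ` V)"

definition twin_set :: "'a set \<Rightarrow> ('a \<Rightarrow> 'a \<Rightarrow> bool) \<Rightarrow> 'a set \<Rightarrow> bool" where
  "twin_set V E W \<longleftrightarrow> W \<subseteq> V \<and> (\<forall>u\<in>W. \<forall>v\<in>W. twins E u v)"

definition tau_set :: "'a set \<Rightarrow> ('a \<Rightarrow> 'a \<Rightarrow> bool) \<Rightarrow> 'a set \<Rightarrow> bool" where
  "tau_set V E W \<longleftrightarrow> twin_set V E W \<and> card W = twin_number V E"

definition is_partition_list :: "'a set \<Rightarrow> 'a set list \<Rightarrow> bool" where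
  "is_partition_list V P \<longleftrightarrow> distinct P \<and> (\<forall>S\<in>set P. S \<noteq> {}) \<and>
     (\<forall>i<length P. \<forall>j<length P. i \<noteq> j \<longrightarrow> P ! i \<inter> P ! j = {}) \<and> \<Union>(set P) = V"

definition rep :: "('a \<Rightarrow> 'a \<Rightarrow> bool) \<Rightarrow> 'a \<Rightarrow> 'a set list \<Rightarrow> nat list" where
  "rep E u P = map (setdist E u) P"

definition locating_partition :: "'a set \<Rightarrow> ('a \<Rightarrow> 'a \<Rightarrow> bool) \<Rightarrow> 'a set list \<Rightarrow> bool" where
  "locating_partition V E P \<longleftrightarrow> is_partition_list V P \<and>
     (\<forall>u\<in>V. \<forall>v\<in>V. u \<noteq> v \<longrightarrow> rep E u P \<noteq> rep E v P)"

definition partition_dimension :: "'a set \<Rightarrow> ('a \<Rightarrow> 'a \<Rightarrow> bool) \<Rightarrow> nat" where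
  "partition_dimension V E = (LEAST k. \<exists>P. length P = k \<and> locating_partition V E P)"

definition graph_iso :: "'a set \<Rightarrow> ('a \<Rightarrow> 'a \<Rightarrow> bool) \<Rightarrow> 'b set \<Rightarrow> ('b \<Rightarrow> 'b \<Rightarrow> bool) \<Rightarrow> bool" where
  "graph_iso V1 E1 V2 E2 \<longleftrightarrow> (\<exists>f. bij_betw f V1 V2 \<and>
     (\<forall>u\<in>V1. \<forall>v\<in>V1. E1 u v \<longleftrightarrow> E2 (f u) (f v)))"

definition induced_edges :: "('a \<Rightarrow> 'a \<Rightarrow> bool) \<Rightarrow> 'a set \<Rightarrow> 'a \<Rightarrow> 'a \<Rightarrow> bool" where
  "induced_edges E W u v \<longleftrightarrow> E u v \<and> u \<in> W \<and> v \<in> W"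

text \<open>Complete graph K_n and its complement on vertex set {0..<n}.\<close>
definition K_edges :: "nat \<Rightarrow> nat \<Rightarrow> bool" where
  "K_edges i j \<longleftrightarrow> i \<noteq> j"

definition coK_edges :: "nat \<Rightarrow> nat \<Rightarrow> bool" where
  "coK_edges i j \<longleftrightarrow> False"


end

theory Submission
  imports Defs
begin



context
  fixes V :: "'a set" and E :: "'a \<Rightarrow> 'a \<Rightarrow> bool"
  assumes cg: "connected_graph V E"
begin

lemma fin: "finite V" using cg by (simp add: connected_graph_def graph_def)
lemma inV: "E u v \<Longrightarrow> u \<in> V \<and> v \<in> V" using cg by (simp add: connected_graph_def graph_def)
lemma symE: "E u v \<Longrightarrow> E v u" using cg by (simp add: connected_graph_def graph_def)
lemma irr: "\<not> E u u" using cg by (simp add: connected_graph_def graph_def)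

lemma ex_path: "u \<in> V \<Longrightarrow> v \<in> V \<Longrightarrow> \<exists>k. (E ^^ k) u v"
proof -
  assume "u \<in> V" "v \<in> V"
  then have "E\<^sup>*\<^sup>* u v" using cg unfolding connected_graph_def by blast
  then show ?thesis by (rule rtranclp_imp_relpowp)
qed

lemma gd_path: "u \<in> V \<Longrightarrow> v \<in> V \<Longrightarrow> (E ^^ gdist E u v) u v"
  unfolding gdist_def using ex_path by (metis LeastI)

lemma gd_le: "(E ^^ k) u v \<Longrightarrow> gdist E u v \<le> k"
  unfolding gdist_def by (rule Least_le)

lemma gd_self: "gdist E u u = 0"
  using gd_le[of 0 u u] by simp

lemma gd_pos: "u \<in> V \<Longrightarrow> v \<in> V \<Longrightarrow> u \<noteq> v \<Longrightarrow> gdist E u v \<ge> 1"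
  using gd_path[of u v] by (metis less_one not_less relpowp_0_E)

lemma gd_one: "E u v \<Longrightarrow> gdist E u v = 1"
proof -
  assume e: "E u v"
  have "(E ^^ 1) u v" using e by (metis relpowp_1)
  then have "gdist E u v \<le> 1" by (rule gd_le)
  moreover have "u \<noteq> v" using e irr by auto
  ultimately show ?thesis using gd_pos inV e by fastforce
qed

lemma gd_two: "u \<in> V \<Longrightarrow> v \<in> V \<Longrightarrow> u \<noteq> v \<Longrightarrow> \<not> E u v \<Longrightarrow> gdist E u v \<ge> 2"
proof -
  assume a: "u \<in> V" "v \<in> V" "u \<noteq> v" "\<not> E u v"
  have "gdist E u v \<ge> 1" using gd_pos a by auto
  moreover have "gdist E u v \<noteq> 1" using gd_path[of u v] a by (metis relpowp_1)
  ultimately show ?thesis by linarith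
qed

lemma sd_img: "S \<subseteq> V \<Longrightarrow> S \<noteq> {} \<Longrightarrow> finite (gdist E u ` S) \<and> gdist E u ` S \<noteq> {}"
  using fin finite_subset by auto

lemma sd_zero: "S \<subseteq> V \<Longrightarrow> u \<in> S \<Longrightarrow> setdist E u S = 0"
  unfolding setdist_def using sd_img[of S u] gd_self
  by (metis Min_le empty_iff image_eqI le_zero_eq)

lemma sd_pos: "S \<subseteq> V \<Longrightarrow> S \<noteq> {} \<Longrightarrow> u \<in> V \<Longrightarrow> u \<notin> S \<Longrightarrow> setdist E u S \<ge> 1"
  unfolding setdist_def using sd_img[of S u] gd_pos
  by (subst Min_ge_iff) auto

lemma sd_one: "S \<subseteq> V \<Longrightarrow> u \<in> V \<Longrightarrow> u \<notin> S \<Longrightarrow> y \<in> S \<Longrightarrow> E u y \<Longrightarrow> setdist E u S = 1"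
proof -
  assume a: "S \<subseteq> V" "u \<in> V" "u \<notin> S" "y \<in> S" "E u y"
  have "gdist E u y \<in> gdist E u ` S" using a by auto
  then have "setdist E u S \<le> gdist E u y" unfolding setdist_def using sd_img[of S u] a
    by (intro Min_le) auto
  then have "setdist E u S \<le> 1" using gd_one a by simp
  moreover have "setdist E u S \<ge> 1" using sd_pos[of S u] a by auto
  ultimately show ?thesis by linarith
qed

lemma sd_two: "S \<subseteq> V \<Longrightarrow> S \<noteq> {} \<Longrightarrow> u \<in> V \<Longrightarrow> u \<notin> S \<Longrightarrow> \<forall>y\<in>S. \<not> E u y \<Longrightarrow> setdist E u S \<ge> 2"
  unfolding setdist_def using sd_img[of S u]
  by (subst Min_ge_iff) (auto intro!: gd_two)

lemma twins_sym: "twins E u v \<Longrightarrow> twins E v u"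
  unfolding twins_def by auto

lemma twins_refl: "twins E u u"
  unfolding twins_def by auto

lemma twin_adj: "twins E u v \<Longrightarrow> E u z \<Longrightarrow> z \<noteq> v \<Longrightarrow> E v z"
  unfolding twins_def nbhd_def using irr by blast

lemma twins_trans: "twins E u v \<Longrightarrow> twins E v w \<Longrightarrow> twins E u w"
proof -
  assume uv: "twins E u v" and vw: "twins E v w"
  have key: "\<And>a b c x. twins E a b \<Longrightarrow> twins E b c \<Longrightarrow> a \<noteq> b \<Longrightarrow> b \<noteq> c \<Longrightarrow> a \<noteq> c
      \<Longrightarrow> E a x \<Longrightarrow> x \<noteq> c \<Longrightarrow> E c x"
  proof -
    fix a b c x assume ab: "twins E a b" and bc: "twins E b c" and d: "a \<noteq> b" "b \<noteq> c" "a \<noteq> c"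
      and ax: "E a x" and xc: "x \<noteq> c"
    show "E c x"
    proof (cases "x = b")
      case False
      then have "E b x" using twin_adj[OF ab ax] by auto
      then show ?thesis using twin_adj[OF bc] xc by auto
    next
      case True
      have "E b a" using ax True symE by auto
      then have "E c a" using twin_adj[OF bc] d by auto
      then have "E a c" using symE by auto
      then have "E b c" using twin_adj[OF ab] d by auto
      then show ?thesis using True symE by auto
    qed
  qed
  show ?thesis
  proof (cases "u = v \<or> v = w \<or> u = w")
    case True then show ?thesis using uv vw twins_refl by auto
  next
    case False
    have 1: "\<And>x. E u x \<Longrightarrow> x \<noteq> w \<Longrightarrow> E w x" using key[OF uv vw] False by auto
    have 2: "\<And>x. E w x \<Longrightarrow> x \<noteq> u \<Longrightarrow> E u x" using key[OF twins_sym[OF vw] twins_sym[OF uv]] False by auto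
    show ?thesis unfolding twins_def nbhd_def using 1 2 irr by auto
  qed
qed

lemma twin_gd_le: "twins E u v \<Longrightarrow> u \<in> V \<Longrightarrow> v \<in> V \<Longrightarrow> y \<in> V \<Longrightarrow> y \<noteq> u \<Longrightarrow> y \<noteq> v
  \<Longrightarrow> gdist E v y \<le> gdist E u y"
proof -
  assume t: "twins E u v" and a: "u \<in> V" "v \<in> V" "y \<in> V" "y \<noteq> u" "y \<noteq> v"
  obtain k where k: "k = gdist E u y" by auto
  have p: "(E ^^ k) u y" using gd_path a k by auto
  show ?thesis
  proof (cases k)
    case 0 then show ?thesis using p a by (auto elim: relpowp_0_E)
  next
    case (Suc m)
    then obtain z where z: "E u z" "(E ^^ m) z y" using p Suc relpowp_Suc_D2 by metis
    show ?thesis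
    proof (cases "z = v")
      case True
      then have "(E ^^ m) v y" using z by simp
      then have "gdist E v y \<le> m" by (rule gd_le)
      then show ?thesis using k Suc by simp
    next
      case False
      then have "E v z" using twin_adj[OF t z(1)] by auto
      then have "(E ^^ Suc m) v y" using z(2) by (rule relpowp_Suc_I2)
      then have "gdist E v y \<le> Suc m" by (rule gd_le)
      then show ?thesis using k Suc by simp
    qed
  qed
qed

lemma twin_sd: "twins E u v \<Longrightarrow> u \<in> V \<Longrightarrow> v \<in> V \<Longrightarrow> S \<subseteq> V \<Longrightarrow> (u \<in> S \<longleftrightarrow> v \<in> S)
  \<Longrightarrow> setdist E u S = setdist E v S"
proof -
  assume t: "twins E u v" and a: "u \<in> V" "v \<in> V" "S \<subseteq> V" "u \<in> S \<longleftrightarrow> v \<in> S"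
  show ?thesis
  proof (cases "u \<in> S")
    case True then show ?thesis using sd_zero a by auto
  next
    case False
    have "gdist E u ` S = gdist E v ` S"
    proof (rule image_cong[OF refl])
      fix y assume "y \<in> S"
      then show "gdist E u y = gdist E v y"
        using twin_gd_le[OF t] twin_gd_le[OF twins_sym[OF t]] a False by (metis le_antisym subsetD)
    qed
    then show ?thesis unfolding setdist_def by simp
  qed
qed

end



context
  fixes V :: "'a set" and E :: "'a \<Rightarrow> 'a \<Rightarrow> bool"
  assumes cg: "connected_graph V E"
begin

lemma loc_from_set:
  assumes fP: "finite PP" and ne: "\<forall>S\<in>PP. S \<noteq> {} \<and> S \<subseteq> V"
    and dj: "\<forall>S\<in>PP. \<forall>T\<in>PP. S \<noteq> T \<longrightarrow> S \<inter> T = {}"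
    and cov: "\<Union>PP = V"
    and sep: "\<forall>S\<in>PP. \<forall>x\<in>S. \<forall>y\<in>S. x \<noteq> y \<longrightarrow> (\<exists>T\<in>PP. setdist E x T \<noteq> setdist E y T)"
  shows "\<exists>P. length P = card PP \<and> locating_partition V E P"
proof -
  obtain xs where xs: "set xs = PP" "distinct xs" using finite_distinct_list[OF fP] by blast
  have len: "length xs = card PP" using xs distinct_card by fastforce
  have part: "is_partition_list V xs"
    unfolding is_partition_list_def
  proof (intro conjI allI impI)
    show "distinct xs" by (rule xs(2))
    show "\<forall>S\<in>set xs. S \<noteq> {}" using ne xs by auto
    show "\<Union> (set xs) = V" using cov xs by auto
    fix i j assume "i < length xs" "j < length xs" "i \<noteq> j"
    then have "xs ! i \<noteq> xs ! j" "xs ! i \<in> PP" "xs ! j \<in> PP" using xs nth_eq_iff_index_eq nth_mem by auto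
    then show "xs ! i \<inter> xs ! j = {}" using dj by auto
  qed
  have "\<forall>u\<in>V. \<forall>v\<in>V. u \<noteq> v \<longrightarrow> rep E u xs \<noteq> rep E v xs"
  proof (intro ballI impI)
    fix u v assume u: "u \<in> V" and v: "v \<in> V" and uv: "u \<noteq> v"
    obtain S where S: "S \<in> PP" "u \<in> S" using u cov by auto
    have "\<exists>T\<in>PP. setdist E u T \<noteq> setdist E v T"
    proof (cases "v \<in> S")
      case True then show ?thesis using sep S uv by auto
    next
      case False
      have "setdist E u S = 0" using sd_zero[OF cg] S ne by auto
      moreover have "setdist E v S \<ge> 1" using sd_pos[OF cg] S ne v False by auto
      ultimately show ?thesis using S by force
    qed
    then show "rep E u xs \<noteq> rep E v xs" unfolding rep_def using xs(1) map_eq_conv by metis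
  qed
  then show ?thesis using part len unfolding locating_partition_def by blast
qed

definition idx :: "'a set list \<Rightarrow> 'a \<Rightarrow> nat" where
  "idx P w = (SOME i. i < length P \<and> w \<in> P ! i)"

lemma idx_spec: "is_partition_list V P \<Longrightarrow> w \<in> V \<Longrightarrow> idx P w < length P \<and> w \<in> P ! idx P w"
proof -
  assume p: "is_partition_list V P" and w: "w \<in> V"
  then obtain S where "S \<in> set P" "w \<in> S" unfolding is_partition_list_def by auto
  then obtain i where "i < length P" "w \<in> P ! i" by (metis in_set_conv_nth)
  then show ?thesis unfolding idx_def by (rule someI[where P="\<lambda>i. i < length P \<and> w \<in> P ! i", OF conjI])
qed

lemma part_sub: "is_partition_list V P \<Longrightarrow> S \<in> set P \<Longrightarrow> S \<subseteq> V"
  unfolding is_partition_list_def by auto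

lemma idx_unique: "is_partition_list V P \<Longrightarrow> j < length P \<Longrightarrow> w \<in> P ! j \<Longrightarrow> w \<in> V \<Longrightarrow> idx P w = j"
  using idx_spec unfolding is_partition_list_def by blast

lemma twin_idx_inj:
  assumes lp: "locating_partition V E P" and T: "T \<subseteq> V" "\<forall>u\<in>T. \<forall>v\<in>T. twins E u v"
  shows "inj_on (idx P) T"
proof (rule inj_onI)
  fix u v assume u: "u \<in> T" and v: "v \<in> T" and eq: "idx P u = idx P v"
  have p: "is_partition_list V P" using lp unfolding locating_partition_def by auto
  have uV: "u \<in> V" and vV: "v \<in> V" using u v T by auto
  let ?i = "idx P u"
  have iu: "?i < length P" "u \<in> P ! ?i" using idx_spec[OF p uV] by auto
  have iv: "v \<in> P ! ?i" using idx_spec[OF p vV] eq by auto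
  have "\<forall>S\<in>set P. setdist E u S = setdist E v S"
  proof
    fix S assume S: "S \<in> set P"
    then obtain j where j: "j < length P" "S = P ! j" by (metis in_set_conv_nth)
    have "u \<in> S \<longleftrightarrow> v \<in> S"
    proof (cases "j = ?i")
      case True then show ?thesis using iu iv j by auto
    next
      case False
      then have "P ! j \<inter> P ! ?i = {}" using p j iu unfolding is_partition_list_def by auto
      then show ?thesis using iu iv j by auto
    qed
    then show "setdist E u S = setdist E v S"
      using twin_sd[OF cg, of u v S] T u v part_sub[OF p S] by auto
  qed
  then have "rep E u P = rep E v P" unfolding rep_def by auto
  then show "u = v" using lp uV vV unfolding locating_partition_def by auto
qed

lemma twin_lower:
  assumes lp: "locating_partition V E P" and T: "T \<subseteq> V" "\<forall>u\<in>T. \<forall>v\<in>T. twins E u v"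
  shows "card T \<le> length P"
proof -
  have p: "is_partition_list V P" using lp unfolding locating_partition_def by auto
  have "idx P ` T \<subseteq> {..<length P}" using idx_spec[OF p] T by auto
  then have "card (idx P ` T) \<le> length P" by (metis card_lessThan card_mono finite_lessThan)
  then show ?thesis using twin_idx_inj[OF lp T] card_image by metis
qed

lemma clique_lower:
  assumes lp: "locating_partition V E P" and W: "W \<subseteq> V" "\<forall>u\<in>W. \<forall>v\<in>W. twins E u v"
    and cl: "\<forall>u\<in>W. \<forall>v\<in>W. u \<noteq> v \<longrightarrow> E u v"
    and v: "v \<in> V" "v \<notin> W" and w0: "w0 \<in> W" "E v w0"
  shows "card W \<noteq> length P"
proof
  assume c: "card W = length P"
  have p: "is_partition_list V P" using lp unfolding locating_partition_def by auto
  have fW: "finite W" using W(1) fin[OF cg] by (rule finite_subset)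
  have inj: "inj_on (idx P) W" using twin_idx_inj[OF lp W] .
  have sub: "idx P ` W \<subseteq> {..<length P}" using idx_spec[OF p] W by auto
  have "card (idx P ` W) = card {..<length P}" using inj c card_image by fastforce
  then have img: "idx P ` W = {..<length P}" using sub by (simp add: card_subset_eq)
  let ?i = "idx P v"
  have iv: "?i < length P" "v \<in> P ! ?i" using idx_spec[OF p v(1)] by auto
  then obtain wi where wi: "wi \<in> W" "idx P wi = ?i" using img by (metis imageE lessThan_iff)
  have wiP: "wi \<in> P ! ?i" using idx_spec[OF p] wi W by (metis subsetD)
  have adjW: "\<And>w. w \<in> W \<Longrightarrow> E v w"
  proof -
    fix w assume w: "w \<in> W"
    have "E w0 v" using w0 symE[OF cg] by auto
    then have "w = w0 \<or> E w v" using twin_adj[OF cg, of w0 w v] W w0 w v by auto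
    then show "E v w" using w0 symE[OF cg] by auto
  qed
  have "\<forall>S\<in>set P. setdist E v S = setdist E wi S"
  proof
    fix S assume S: "S \<in> set P"
    then obtain j where j: "j < length P" "S = P ! j" by (metis in_set_conv_nth)
    have SV: "S \<subseteq> V" using part_sub[OF p S] .
    show "setdist E v S = setdist E wi S"
    proof (cases "j = ?i")
      case True then show ?thesis using sd_zero[OF cg SV] iv wiP j by auto
    next
      case False
      have dis: "P ! j \<inter> P ! ?i = {}" using p j iv False unfolding is_partition_list_def by auto
      obtain wj where wj: "wj \<in> W" "idx P wj = j" using img j by (metis imageE lessThan_iff)
      have wjS: "wj \<in> S" using idx_spec[OF p] wj W j by (metis subsetD)
      have "wi \<noteq> wj" using wi wj False by auto
      then have "E wi wj" using cl wi wj by auto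
      then have "setdist E wi S = 1" using sd_one[OF cg SV, of wi wj] wi W dis wiP wjS j by auto
      moreover have "setdist E v S = 1" using sd_one[OF cg SV, of v wj] v adjW[OF wj(1)] dis iv wjS j by auto
      ultimately show ?thesis by simp
    qed
  qed
  then have "rep E v P = rep E wi P" unfolding rep_def by auto
  moreover have "v \<noteq> wi" using v wi by auto
  ultimately show False using lp v wi W unfolding locating_partition_def by auto
qed

end



context
  fixes V :: "'a set" and E :: "'a \<Rightarrow> 'a \<Rightarrow> bool"
  assumes cg: "connected_graph V E"
begin

lemma twin_class_set: "twin_set V E (twin_class V E u)"
  unfolding twin_set_def twin_class_def
  using twins_trans[OF cg] twins_sym[OF cg] by blast

lemma twin_number_ge: "u \<in> V \<Longrightarrow> card (twin_class V E u) \<le> twin_number V E"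
  unfolding twin_number_def using fin[OF cg] by (intro Max_ge) auto

lemma V_ne: "V \<noteq> {}" using cg by (simp add: connected_graph_def graph_def)

lemma tau_exists: "\<exists>W. tau_set V E W"
proof -
  have "twin_number V E \<in> (\<lambda>u. card (twin_class V E u)) ` V"
    unfolding twin_number_def using fin[OF cg] V_ne by (intro Max_in) auto
  then obtain u where "card (twin_class V E u) = twin_number V E" by auto
  then show ?thesis using twin_class_set unfolding tau_set_def by blast
qed

lemma twin_set_le: "twin_set V E T \<Longrightarrow> card T \<le> twin_number V E"
proof (cases "T = {}")
  case True then show ?thesis by simp
next
  case False
  assume T: "twin_set V E T"
  then obtain u where u: "u \<in> T" using False by auto
  have "T \<subseteq> twin_class V E u" using T u unfolding twin_set_def twin_class_def by auto
  moreover have "finite (twin_class V E u)" using fin[OF cg] unfolding twin_class_def by auto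
  ultimately have "card T \<le> card (twin_class V E u)" by (rule card_mono[rotated])
  also have "\<dots> \<le> twin_number V E" using twin_number_ge u T unfolding twin_set_def by auto
  finally show ?thesis .
qed

lemma tau_max:
  assumes W: "tau_set V E W" and w: "w \<in> W" and x: "x \<in> V" "x \<notin> W"
  shows "\<not> twins E w x"
proof
  assume t: "twins E w x"
  have ts: "twin_set V E W" and c: "card W = twin_number V E" using W unfolding tau_set_def by auto
  have "twin_set V E (insert x W)"
    unfolding twin_set_def
  proof (intro conjI ballI)
    show "insert x W \<subseteq> V" using ts x unfolding twin_set_def by auto
    fix a b assume a: "a \<in> insert x W" and b: "b \<in> insert x W"
    have tx: "\<And>y. y \<in> W \<Longrightarrow> twins E x y"
      using twins_trans[OF cg] twins_sym[OF cg] t ts w unfolding twin_set_def by blast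
    show "twins E a b"
      using a b tx twins_sym[OF cg] twins_refl[OF cg] ts unfolding twin_set_def by blast
  qed
  then have "card (insert x W) \<le> twin_number V E" by (rule twin_set_le)
  moreover have "finite W" using ts fin[OF cg] finite_subset unfolding twin_set_def by blast
  ultimately show False using c x by simp
qed

lemma gen_part:
  assumes R: "R \<subseteq> V" and clsV: "\<forall>x\<in>V. cls x \<in> R" and clsR: "\<forall>z\<in>R. cls z = z"
    and sep: "\<forall>x\<in>V. \<forall>y\<in>V. x \<noteq> y \<and> cls x = cls y \<longrightarrow>
        (\<exists>z\<in>R. setdist E x {v\<in>V. cls v = z} \<noteq> setdist E y {v\<in>V. cls v = z})"
  shows "\<exists>P. length P = card R \<and> locating_partition V E P"
proof -
  define C where "C z = {v\<in>V. cls v = z}" for z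
  have inj: "inj_on C R"
  proof (rule inj_onI)
    fix a b assume "a \<in> R" "b \<in> R" "C a = C b"
    then have "a \<in> C b" using R clsR unfolding C_def by auto
    then show "a = b" using \<open>a \<in> R\<close> clsR unfolding C_def by auto
  qed
  have "\<exists>P. length P = card (C ` R) \<and> locating_partition V E P"
  proof (rule loc_from_set[OF cg])
    show "finite (C ` R)" using R fin[OF cg] finite_subset by blast
    show "\<forall>S\<in>C ` R. S \<noteq> {} \<and> S \<subseteq> V" using R clsR unfolding C_def by auto
    show "\<forall>S\<in>C ` R. \<forall>T\<in>C ` R. S \<noteq> T \<longrightarrow> S \<inter> T = {}" unfolding C_def by auto
    show "\<Union> (C ` R) = V" using clsV unfolding C_def by auto
    show "\<forall>S\<in>C ` R. \<forall>x\<in>S. \<forall>y\<in>S. x \<noteq> y \<longrightarrow> (\<exists>T\<in>C ` R. setdist E x T \<noteq> setdist E y T)"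
      using sep unfolding C_def by fastforce
  qed
  then show ?thesis using card_image[OF inj] by simp
qed

end



definition wit :: "'a set \<Rightarrow> ('a \<Rightarrow> 'a \<Rightarrow> bool) \<Rightarrow> 'a set \<Rightarrow> 'a \<Rightarrow> 'a \<Rightarrow> bool" where
  "wit V E W a c \<longleftrightarrow> c \<in> V - W \<and> c \<noteq> a \<and>
     ((c \<in> {x\<in>V-W. \<exists>w\<in>W. E w x} \<and> \<not> E a c) \<or> (c \<notin> {x\<in>V-W. \<exists>w\<in>W. E w x} \<and> E a c))"

context
  fixes V :: "'a set" and E :: "'a \<Rightarrow> 'a \<Rightarrow> bool" and W :: "'a set"
  assumes cg: "connected_graph V E" and tau: "tau_set V E W" and WV: "W \<noteq> V"
    and big: "card V < 2 * card W"
begin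

abbreviation "U \<equiv> V - W"
abbreviation "N \<equiv> {x\<in>V-W. \<exists>w\<in>W. E w x}"

lemma WsubV: "W \<subseteq> V" using tau unfolding tau_set_def twin_set_def by auto
lemma Wtw: "u \<in> W \<Longrightarrow> v \<in> W \<Longrightarrow> twins E u v" using tau unfolding tau_set_def twin_set_def by auto
lemma finW: "finite W" using WsubV fin[OF cg] by (rule finite_subset)
lemma cardU: "card U < card W"
proof -
  have "card U = card V - card W" using WsubV finW by (simp add: card_Diff_subset)
  then show ?thesis using big by linarith
qed

lemma Wne: "W \<noteq> {}" using big by (cases "W = {}") auto

lemma adjN: "x \<in> N \<Longrightarrow> w \<in> W \<Longrightarrow> E w x"
proof -
  assume x: "x \<in> N" and w: "w \<in> W"
  then obtain w' where w': "w' \<in> W" "E w' x" by auto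
  show "E w x"
  proof (cases "w = w'")
    case True then show ?thesis using w' by simp
  next
    case False then show ?thesis using twin_adj[OF cg Wtw[OF w'(1) w] w'(2)] x w by auto
  qed
qed

lemma notadj: "x \<in> U \<Longrightarrow> x \<notin> N \<Longrightarrow> w \<in> W \<Longrightarrow> \<not> E w x \<and> \<not> E x w"
  using symE[OF cg] by blast

lemma nbhd_eq_twins: "w \<in> W \<Longrightarrow> x \<in> U \<Longrightarrow> nbhd E w - {x} = nbhd E x - {w} \<Longrightarrow> False"
  using tau_max[OF cg tau, of w x] unfolding twins_def by auto

lemma indep_wit:
  assumes ind: "\<forall>x\<in>W. \<forall>y\<in>W. \<not> E x y" and u: "u \<in> U" "u \<notin> N"
  shows "\<exists>c. wit V E W u c"
proof (rule ccontr)
  assume nw: "\<nexists>c. wit V E W u c"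
  obtain w where w: "w \<in> W" using Wne by blast
  have "nbhd E w - {u} = nbhd E u - {w}"
  proof (rule set_eqI)
    fix x
    have "x \<in> nbhd E w \<longleftrightarrow> x \<in> N"
      using ind w adjN[of x w] inV[OF cg, of w x] unfolding nbhd_def by blast
    moreover have "x \<in> nbhd E u \<longleftrightarrow> x \<in> N"
    proof
      assume e: "x \<in> nbhd E u"
      then have xV: "x \<in> V" "E u x" using inV[OF cg] unfolding nbhd_def by auto
      have "x \<notin> W" using e notadj[OF u] unfolding nbhd_def by auto
      moreover have "x \<noteq> u" using irr[OF cg] xV by auto
      ultimately show "x \<in> N" using nw xV unfolding wit_def by blast
    next
      assume x: "x \<in> N"
      then have "x \<noteq> u" using u by auto
      then show "x \<in> nbhd E u" using nw x unfolding wit_def nbhd_def by blast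
    qed
    ultimately show "x \<in> nbhd E w - {u} \<longleftrightarrow> x \<in> nbhd E u - {w}" using u w by auto
  qed
  then show False using nbhd_eq_twins w u by auto
qed

lemma clique_wit:
  assumes cl: "\<forall>x\<in>W. \<forall>y\<in>W. x \<noteq> y \<longrightarrow> E x y" and a: "a \<in> N"
  shows "\<exists>c. wit V E W a c"
proof (rule ccontr)
  assume nw: "\<nexists>c. wit V E W a c"
  obtain w where w: "w \<in> W" using Wne by blast
  have aU: "a \<in> U" using a by auto
  have "nbhd E w - {a} = nbhd E a - {w}"
  proof (rule set_eqI)
    fix x
    have L: "x \<in> nbhd E w - {a} \<longleftrightarrow> (x \<in> W - {w}) \<or> (x \<in> N - {a})"
    proof
      assume "x \<in> nbhd E w - {a}"
      then have e: "E w x" "x \<noteq> a" unfolding nbhd_def by auto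
      then have "x \<in> V" "x \<noteq> w" using inV[OF cg] irr[OF cg] by auto
      then show "(x \<in> W - {w}) \<or> (x \<in> N - {a})" using e w by auto
    next
      assume h: "(x \<in> W - {w}) \<or> (x \<in> N - {a})"
      then have "E w x"
      proof
        assume "x \<in> W - {w}" then show "E w x" using cl w by auto
      next
        assume "x \<in> N - {a}" then show "E w x" using adjN[of x w] w by blast
      qed
      then show "x \<in> nbhd E w - {a}" using h aU unfolding nbhd_def by auto
    qed
    have R: "x \<in> nbhd E a - {w} \<longleftrightarrow> (x \<in> W - {w}) \<or> (x \<in> N - {a})"
    proof
      assume "x \<in> nbhd E a - {w}"
      then have e: "E a x" "x \<noteq> w" unfolding nbhd_def by auto
      then have xV: "x \<in> V" "x \<noteq> a" using inV[OF cg] irr[OF cg] by auto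
      show "(x \<in> W - {w}) \<or> (x \<in> N - {a})"
      proof (cases "x \<in> W")
        case True then show ?thesis using e by auto
      next
        case False
        then show ?thesis using nw xV e unfolding wit_def by blast
      qed
    next
      assume x: "(x \<in> W - {w}) \<or> (x \<in> N - {a})"
      show "x \<in> nbhd E a - {w}"
      proof (cases "x \<in> W")
        case True
        then show ?thesis using x adjN[OF a] symE[OF cg] unfolding nbhd_def by auto
      next
        case False
        then have "x \<in> N" "x \<noteq> a" using x by auto
        then have "E a x" using nw unfolding wit_def by blast
        then show ?thesis using False x w unfolding nbhd_def by auto
      qed
    qed
    show "x \<in> nbhd E w - {a} \<longleftrightarrow> x \<in> nbhd E a - {w}" using L R by simp
  qed
  then show False using nbhd_eq_twins w aU by auto
qed

end



context
  fixes V :: "'a set" and E :: "'a \<Rightarrow> 'a \<Rightarrow> bool" and W :: "'a set"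
  assumes cg: "connected_graph V E" and tau: "tau_set V E W" and WV: "W \<noteq> V"
    and big: "card V < 2 * card W"
begin

lemma domination:
  assumes cl: "\<forall>x\<in>W. \<forall>y\<in>W. x \<noteq> y \<longrightarrow> E x y"
  shows "\<exists>B. B \<subseteq> V - W \<and> 2 * card B \<le> card (V - W) \<and>
           (\<forall>a\<in>{x\<in>V-W. \<exists>w\<in>W. E w x} - B. \<exists>b\<in>B. wit V E W a b)"
proof -
  let ?U = "V - W"
  let ?N = "{x\<in>V-W. \<exists>w\<in>W. E w x}"
  define Dom where "Dom B \<longleftrightarrow> B \<subseteq> ?U \<and> (\<forall>a\<in>?N - B. \<exists>b\<in>B. wit V E W a b)" for B
  have finU: "finite ?U" using fin[OF cg] by auto
  have "Dom ?U" unfolding Dom_def by auto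
  then have am: "Dom (arg_min card Dom) \<and> (\<forall>y. Dom y \<longrightarrow> card (arg_min card Dom) \<le> card y)"
    by (rule arg_min_nat_lemma)
  define B0 where "B0 = arg_min card Dom"
  have D0: "Dom B0" and minB: "\<And>B. Dom B \<Longrightarrow> card B0 \<le> card B" using am unfolding B0_def by auto
  have B0U: "B0 \<subseteq> ?U" using D0 unfolding Dom_def by auto
  have finB0: "finite B0" using B0U finU finite_subset by blast
  have DC: "Dom (?U - B0)"
    unfolding Dom_def
  proof (intro conjI ballI)
    show "?U - B0 \<subseteq> ?U" by auto
    fix a assume a: "a \<in> ?N - (?U - B0)"
    then have aB: "a \<in> B0" and aN: "a \<in> ?N" by auto
    show "\<exists>b\<in>?U - B0. wit V E W a b"
    proof (rule ccontr)
      assume nb: "\<not> (\<exists>b\<in>?U - B0. wit V E W a b)"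
      have "Dom (B0 - {a})"
        unfolding Dom_def
      proof (intro conjI ballI)
        show "B0 - {a} \<subseteq> ?U" using B0U by auto
        fix x assume x: "x \<in> ?N - (B0 - {a})"
        show "\<exists>b\<in>B0 - {a}. wit V E W x b"
        proof (cases "x = a")
          case True
          obtain c where c: "wit V E W a c" using clique_wit[OF cg tau WV big cl aN] by auto
          then have "c \<in> B0" "c \<noteq> a" using nb unfolding wit_def by auto
          then show ?thesis using c True by auto
        next
          case False
          then have "x \<in> ?N - B0" using x by auto
          then obtain b where b: "b \<in> B0" "wit V E W x b" using D0 unfolding Dom_def by auto
          show ?thesis
          proof (cases "b = a")
            case False then show ?thesis using b by auto
          next
            case True
            then have "\<not> E x a" "x \<noteq> a" using b aN unfolding wit_def by auto
            then have "wit V E W a x" using x symE[OF cg, of a x] unfolding wit_def by auto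
            moreover have "x \<in> ?U - B0" using x \<open>x \<noteq> a\<close> by auto
            ultimately show ?thesis using nb by auto
          qed
        qed
      qed
      then have "card B0 \<le> card (B0 - {a})" by (rule minB)
      moreover have "card (B0 - {a}) < card B0" using finB0 aB by (rule card_Diff1_less)
      ultimately show False by simp
    qed
  qed
  have cs0: "card (?U - B0) = card ?U - card B0" by (rule card_Diff_subset[OF finB0 B0U])
  have "card B0 \<le> card ?U" using B0U finU by (rule card_mono[rotated])
  then have cs: "card B0 + card (?U - B0) = card ?U" using cs0 by simp
  show ?thesis
  proof (cases "card B0 \<le> card (?U - B0)")
    case True then show ?thesis using D0 cs unfolding Dom_def by (intro exI[of _ B0]) auto
  next
    case False then show ?thesis using DC cs unfolding Dom_def by (intro exI[of _ "?U - B0"]) auto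
  qed
qed

end



context
  fixes V :: "'a set" and E :: "'a \<Rightarrow> 'a \<Rightarrow> bool" and W :: "'a set"
  assumes cg: "connected_graph V E" and tau: "tau_set V E W" and WV: "W \<noteq> V"
    and big: "card V < 2 * card W"
begin

lemma upper:
  assumes BU: "B \<subseteq> V - W"
    and cases: "((\<forall>x\<in>W. \<forall>y\<in>W. \<not> E x y) \<and> B = {}) \<or>
       ((\<forall>x\<in>W. \<forall>y\<in>W. x \<noteq> y \<longrightarrow> E x y) \<and> (\<forall>a\<in>{x\<in>V-W. \<exists>w\<in>W. E w x} - B. \<exists>b\<in>B. wit V E W a b))"
  shows "\<exists>P. length P = card W + card B \<and> locating_partition V E P"
proof -
  let ?N = "{x\<in>V-W. \<exists>w\<in>W. E w x}"
  define A where "A = V - W - B"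
  have WsV: "W \<subseteq> V" using WsubV[OF cg tau WV big] .
  have fW: "finite W" using finW[OF cg tau WV big] .
  have fV: "finite V" using fin[OF cg] .
  obtain w0 where w0: "w0 \<in> W" using Wne[OF cg tau WV big] by auto
  have "card A \<le> card (V - W)" unfolding A_def using fV by (intro card_mono) auto
  then have "card A < card W" using cardU[OF cg tau WV big] by linarith
  moreover have "card (W - {w0}) = card W - 1" using w0 fW by simp
  ultimately have "card A \<le> card (W - {w0})" by linarith
  moreover have "finite A" unfolding A_def using fV by auto
  ultimately obtain g where g: "g ` A \<subseteq> W - {w0}" "inj_on g A"
    using card_le_inj[of A "W - {w0}"] fW by auto
  define cls where "cls x = (if x \<in> W then x else if x \<in> B then x else g x)" for x
  define T where "T z = {v\<in>V. cls v = z}" for z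
  have fB: "finite B" using BU fV finite_subset by blast
  have cardR: "card (W \<union> B) = card W + card B"
    using fW fB BU by (intro card_Un_disjoint) auto
  have T0: "T w0 = {w0}"
  proof -
    have "\<And>v. v \<in> V \<Longrightarrow> cls v = w0 \<Longrightarrow> v = w0"
    proof -
      fix v assume v: "v \<in> V" "cls v = w0"
      show "v = w0"
      proof (cases "v \<in> W")
        case True then show ?thesis using v unfolding cls_def by auto
      next
        case False
        show ?thesis
        proof (cases "v \<in> B")
          case True then show ?thesis using v False w0 unfolding cls_def by auto
        next
          case nb: False
          then have "v \<in> A" using v False unfolding A_def by auto
          then have "g v \<in> W - {w0}" using g by auto
          then show ?thesis using v False nb unfolding cls_def by auto
        qed
      qed
    qed
    then show ?thesis using w0 WsV unfolding T_def cls_def by auto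
  qed
  have TB: "\<And>b. b \<in> B \<Longrightarrow> T b = {b}"
  proof -
    fix b assume b: "b \<in> B"
    have bW: "b \<notin> W" using b BU by auto
    have "\<And>v. v \<in> V \<Longrightarrow> cls v = b \<Longrightarrow> v = b"
    proof -
      fix v assume v: "v \<in> V" "cls v = b"
      show "v = b"
      proof (cases "v \<in> W \<or> v \<in> B")
        case True then show ?thesis using v unfolding cls_def by auto
      next
        case False
        then have "v \<in> A" using v unfolding A_def by auto
        then have "g v \<in> W" using g by auto
        then show ?thesis using v False bW unfolding cls_def by auto
      qed
    qed
    moreover have "b \<in> V" "cls b = b" using b BU bW unfolding cls_def by auto
    ultimately show "T b = {b}" unfolding T_def by auto
  qed
  have TA: "\<And>c. c \<in> A \<Longrightarrow> T (g c) = {g c, c}"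
  proof -
    fix c assume c: "c \<in> A"
    have gc: "g c \<in> W" using g c by auto
    have "\<And>v. v \<in> V \<Longrightarrow> cls v = g c \<Longrightarrow> v = g c \<or> v = c"
    proof -
      fix v assume v: "v \<in> V" "cls v = g c"
      show "v = g c \<or> v = c"
      proof (cases "v \<in> W")
        case True then show ?thesis using v unfolding cls_def by auto
      next
        case False
        show ?thesis
        proof (cases "v \<in> B")
          case True then show ?thesis using v False gc BU unfolding cls_def by auto
        next
          case nb: False
          then have vA: "v \<in> A" using v False unfolding A_def by auto
          then have "g v = g c" using v False nb unfolding cls_def by auto
          then show ?thesis using g(2) vA c by (meson inj_onD)
        qed
      qed
    qed
    moreover have "c \<in> V" "cls c = g c" "g c \<in> V" "cls (g c) = g c"
      using c gc WsV unfolding A_def cls_def by auto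
    ultimately show "T (g c) = {g c, c}" unfolding T_def by auto
  qed
  have AU: "A \<subseteq> V - W" unfolding A_def by auto
  have core: "\<And>u. u \<in> A \<Longrightarrow> \<exists>z\<in>W \<union> B. setdist E (g u) (T z) \<noteq> setdist E u (T z)"
  proof -
    fix u assume uA: "u \<in> A"
    let ?w = "g u"
    have uV: "u \<in> V" and uW: "u \<notin> W" and uB: "u \<notin> B" using uA unfolding A_def by auto
    have w: "?w \<in> W" "?w \<noteq> w0" using g uA by auto
    have wV: "?w \<in> V" using w WsV by auto
    have w0V: "{w0} \<subseteq> V" using w0 WsV by auto
    show "\<exists>z\<in>W \<union> B. setdist E ?w (T z) \<noteq> setdist E u (T z)"
      using cases
    proof
      assume ind: "(\<forall>x\<in>W. \<forall>y\<in>W. \<not> E x y) \<and> B = {}"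
      show ?thesis
      proof (cases "u \<in> ?N")
        case True
        have "E w0 u" using adjN[OF cg tau WV big True w0] .
        then have "setdist E u {w0} = 1" using sd_one[OF cg w0V uV, of w0] uW w0 symE[OF cg] by auto
        moreover have "setdist E ?w {w0} \<ge> 2" using sd_two[OF cg w0V _ wV] w ind w0 by auto
        ultimately show ?thesis using T0 w0 by (intro bexI[of _ w0]) auto
      next
        case False
        obtain c where c: "wit V E W u c" using indep_wit[OF cg tau WV big _ _ False] ind uV uW by auto
        have cA: "c \<in> A" using c ind unfolding wit_def A_def by auto
        have cu: "c \<noteq> u" using c unfolding wit_def by auto
        have gc: "g c \<in> W" "g c \<noteq> ?w" using g cA uA cu inj_onD by fastforce+
        have cV: "c \<in> V" "c \<notin> W" using cA unfolding A_def by auto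
        have TV: "{g c, c} \<subseteq> V" using gc cV WsV by auto
        have wT: "?w \<notin> {g c, c}" using gc cV w by auto
        have uT: "u \<notin> {g c, c}" using cu gc uW by auto
        have nu: "\<not> E u (g c)" using notadj[OF cg tau WV big _ False gc(1)] uV uW by auto
        have "setdist E ?w {g c, c} \<noteq> setdist E u {g c, c}"
        proof (cases "c \<in> ?N")
          case True
          then have nuc: "\<not> E u c" using c unfolding wit_def by auto
          have "E ?w c" using adjN[OF cg tau WV big True w(1)] .
          then have "setdist E ?w {g c, c} = 1" using sd_one[OF cg TV wV wT, of c] by auto
          moreover have "setdist E u {g c, c} \<ge> 2" using sd_two[OF cg TV _ uV uT] nu nuc by auto
          ultimately show ?thesis by simp
        next
          case cN: False
          then have euc: "E u c" using c unfolding wit_def by auto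
          then have "setdist E u {g c, c} = 1" using sd_one[OF cg TV uV uT, of c] by auto
          moreover have "\<not> E ?w c" using notadj[OF cg tau WV big _ cN w(1)] cV by auto
          moreover have "\<not> E ?w (g c)" using ind gc w by auto
          ultimately have "setdist E ?w {g c, c} \<ge> 2" "setdist E u {g c, c} = 1"
            using sd_two[OF cg TV _ wV wT] by auto
          then show ?thesis by simp
        qed
        then show ?thesis using TA[OF cA] gc by (intro bexI[of _ "g c"]) auto
      qed
    next
      assume cl: "(\<forall>x\<in>W. \<forall>y\<in>W. x \<noteq> y \<longrightarrow> E x y) \<and> (\<forall>a\<in>?N - B. \<exists>b\<in>B. wit V E W a b)"
      show ?thesis
      proof (cases "u \<in> ?N")
        case False
        have "E ?w w0" using cl w w0 by auto
        then have "setdist E ?w {w0} = 1" using sd_one[OF cg w0V wV, of w0] w by auto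
        moreover have "setdist E u {w0} \<ge> 2"
          using sd_two[OF cg w0V _ uV] notadj[OF cg tau WV big _ False w0] uV uW w0 by auto
        ultimately show ?thesis using T0 w0 by (intro bexI[of _ w0]) auto
      next
        case True
        then have "u \<in> ?N - B" using uB by blast
        then obtain b where b: "b \<in> B" "wit V E W u b" using cl by blast
        have bV: "{b} \<subseteq> V" "b \<in> V" "b \<notin> W" using b BU by auto
        have bu: "b \<noteq> u" using b unfolding wit_def by auto
        have wb: "?w \<noteq> b" using w bV by auto
        have "setdist E ?w {b} \<noteq> setdist E u {b}"
        proof (cases "b \<in> ?N")
          case bN: True
          then have nub: "\<not> E u b" using b unfolding wit_def by auto
          have "E ?w b" using adjN[OF cg tau WV big bN w(1)] .
          then have "setdist E ?w {b} = 1" using sd_one[OF cg bV(1) wV, of b] wb by auto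
          moreover have "setdist E u {b} \<ge> 2" using sd_two[OF cg bV(1) _ uV] nub bu by auto
          ultimately show ?thesis by simp
        next
          case bN: False
          then have eub: "E u b" using b unfolding wit_def by auto
          then have "setdist E u {b} = 1" using sd_one[OF cg bV(1) uV, of b] bu by auto
          moreover have "\<not> E ?w b" using notadj[OF cg tau WV big _ bN w(1)] bV by auto
          ultimately have "setdist E ?w {b} \<ge> 2" "setdist E u {b} = 1"
            using sd_two[OF cg bV(1) _ wV] wb by auto
          then show ?thesis by simp
        qed
        then show ?thesis using TB[OF b(1)] b by (intro bexI[of _ b]) auto
      qed
    qed
  qed
  have "\<exists>P. length P = card (W \<union> B) \<and> locating_partition V E P"
  proof (rule gen_part[OF cg, of "W \<union> B" cls])
    show "W \<union> B \<subseteq> V" using WsV BU by auto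
    show "\<forall>x\<in>V. cls x \<in> W \<union> B" using g unfolding cls_def A_def by auto
    show "\<forall>z\<in>W \<union> B. cls z = z" unfolding cls_def by auto
    show "\<forall>x\<in>V. \<forall>y\<in>V. x \<noteq> y \<and> cls x = cls y \<longrightarrow>
        (\<exists>z\<in>W \<union> B. setdist E x {v \<in> V. cls v = z} \<noteq> setdist E y {v \<in> V. cls v = z})"
    proof (intro ballI impI)
      fix x y assume x: "x \<in> V" and y: "y \<in> V" and xy: "x \<noteq> y \<and> cls x = cls y"
      have gW: "\<And>v. v \<in> A \<Longrightarrow> g v \<in> W" using g by auto
      have BW: "\<And>v. v \<in> B \<Longrightarrow> v \<notin> W" using BU by auto
      have "(x \<in> W \<and> y \<in> A \<and> g y = x) \<or> (y \<in> W \<and> x \<in> A \<and> g x = y)"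
      proof -
        have xc: "x \<in> W \<or> x \<in> B \<or> x \<in> A" and yc: "y \<in> W \<or> y \<in> B \<or> y \<in> A"
          using x y unfolding A_def by auto
        have cx: "x \<in> W \<or> x \<in> B \<Longrightarrow> cls x = x" "x \<in> A \<Longrightarrow> cls x = g x"
          unfolding cls_def A_def by auto
        have cy: "y \<in> W \<or> y \<in> B \<Longrightarrow> cls y = y" "y \<in> A \<Longrightarrow> cls y = g y"
          unfolding cls_def A_def by auto
        have "\<not> (x \<in> A \<and> y \<in> A)" using xy cx cy g(2) inj_onD by metis
        then show ?thesis using xc yc cx cy xy gW BW by metis
      qed
      then show "\<exists>z\<in>W \<union> B. setdist E x {v \<in> V. cls v = z} \<noteq> setdist E y {v \<in> V. cls v = z}"
      proof (elim disjE conjE)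
        assume "y \<in> A" "g y = x"
        then obtain z where z: "z \<in> W \<union> B" "setdist E (g y) (T z) \<noteq> setdist E y (T z)"
          using core by blast
        show ?thesis using z \<open>g y = x\<close> unfolding T_def by (intro bexI[of _ z]) simp_all
      next
        assume "x \<in> A" "g x = y"
        then obtain z where z: "z \<in> W \<union> B" "setdist E (g x) (T z) \<noteq> setdist E x (T z)"
          using core by blast
        have "setdist E x (T z) \<noteq> setdist E y (T z)" using z(2) \<open>g x = y\<close> by auto
        then show ?thesis using z(1) unfolding T_def by (intro bexI[of _ z]) simp_all
      qed
    qed
  qed
  then show ?thesis using cardR by simp
qed

end



lemma iso_K_gen:
  assumes "finite W" "\<forall>x. \<not> R x x" "\<forall>x\<in>W. \<forall>y\<in>W. x \<noteq> y \<longrightarrow> R x y"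
  shows "graph_iso W R {..<card W} K_edges"
proof -
  obtain h where h: "bij_betw h W {0..<card W}" using ex_bij_betw_finite_nat[OF assms(1)] by auto
  have "\<forall>u\<in>W. \<forall>v\<in>W. R u v \<longleftrightarrow> K_edges (h u) (h v)"
    using assms(2,3) bij_betw_imp_inj_on[OF h] unfolding K_edges_def inj_on_def by metis
  then show ?thesis unfolding graph_iso_def using h atLeast0LessThan by metis
qed

lemma iso_K_conv:
  assumes "graph_iso W R {..<k} K_edges" "x \<in> W" "y \<in> W" "x \<noteq> y"
  shows "R x y"
proof -
  obtain f where f: "bij_betw f W {..<k}" "\<forall>u\<in>W. \<forall>v\<in>W. R u v \<longleftrightarrow> K_edges (f u) (f v)"
    using assms(1) unfolding graph_iso_def by auto
  have "f x \<noteq> f y" using bij_betw_imp_inj_on[OF f(1)] assms(2-4) unfolding inj_on_def by auto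
  then show ?thesis using f(2) assms(2,3) unfolding K_edges_def by auto
qed

lemma iso_coK_gen:
  assumes "finite W" "\<forall>x\<in>W. \<forall>y\<in>W. \<not> R x y"
  shows "graph_iso W R {..<card W} coK_edges"
proof -
  obtain h where h: "bij_betw h W {0..<card W}" using ex_bij_betw_finite_nat[OF assms(1)] by auto
  have "\<forall>u\<in>W. \<forall>v\<in>W. R u v \<longleftrightarrow> coK_edges (h u) (h v)"
    using assms(2) unfolding coK_edges_def by auto
  then show ?thesis unfolding graph_iso_def using h atLeast0LessThan by metis
qed

lemma iso_coK_conv:
  assumes "graph_iso W R {..<k} coK_edges" "x \<in> W" "y \<in> W"
  shows "\<not> R x y"
  using assms unfolding graph_iso_def coK_edges_def by auto

context
  fixes V :: "'a set" and E :: "'a \<Rightarrow> 'a \<Rightarrow> bool"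
  assumes cg: "connected_graph V E"
begin

lemma dichotomy:
  assumes W: "\<forall>u\<in>W. \<forall>v\<in>W. twins E u v"
  shows "(\<forall>x\<in>W. \<forall>y\<in>W. \<not> E x y) \<or> (\<forall>x\<in>W. \<forall>y\<in>W. x \<noteq> y \<longrightarrow> E x y)"
proof (cases "\<exists>a\<in>W. \<exists>b\<in>W. E a b")
  case False then show ?thesis by auto
next
  case True
  then obtain a b where ab: "a \<in> W" "b \<in> W" "E a b" by auto
  have c1: "\<And>y. y \<in> W \<Longrightarrow> y \<noteq> a \<Longrightarrow> E a y"
  proof -
    fix y assume y: "y \<in> W" "y \<noteq> a"
    show "E a y"
    proof (cases "y = b")
      case True then show ?thesis using ab by simp
    next
      case False
      have "E b a" using ab symE[OF cg] by auto
      then have "E y a" using twin_adj[OF cg W[rule_format, OF ab(2) y(1)]] y by auto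
      then show ?thesis using symE[OF cg] by auto
    qed
  qed
  have "\<forall>x\<in>W. \<forall>y\<in>W. x \<noteq> y \<longrightarrow> E x y"
  proof (intro ballI impI)
    fix x y assume x: "x \<in> W" and y: "y \<in> W" and xy: "x \<noteq> y"
    show "E x y"
    proof (cases "x = a")
      case True then show ?thesis using c1 y xy by auto
    next
      case xa: False
      then have "E x a" using c1 x symE[OF cg] by auto
      show ?thesis
      proof (cases "y = a")
        case True then show ?thesis using \<open>E x a\<close> by simp
      next
        case False
        have "E a x" using c1 x xa by auto
        then have "E y x" using twin_adj[OF cg W[rule_format, OF ab(1) y]] xy by auto
        then show ?thesis using symE[OF cg] by auto
      qed
    qed
  qed
  then show ?thesis by auto
qed

lemma crossing:
  assumes "W \<subseteq> V" "W \<noteq> {}" "W \<noteq> V"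
  shows "\<exists>v\<in>V - W. \<exists>w\<in>W. E v w"
proof -
  obtain w x where w: "w \<in> W" and x: "x \<in> V" "x \<notin> W" using assms by blast
  have p: "E\<^sup>*\<^sup>* w x" using cg w x assms(1) unfolding connected_graph_def by blast
  have "\<And>a b. E\<^sup>*\<^sup>* a b \<Longrightarrow> a \<in> W \<Longrightarrow> b \<notin> W \<Longrightarrow> \<exists>v\<in>V - W. \<exists>w\<in>W. E v w"
  proof -
    fix a b assume "E\<^sup>*\<^sup>* a b" "a \<in> W" "b \<notin> W"
    then show "\<exists>v\<in>V - W. \<exists>w\<in>W. E v w"
    proof (induction rule: rtranclp_induct)
      case base then show ?case by simp
    next
      case (step y z)
      show ?case
      proof (cases "y \<in> W")
        case False then show ?thesis using step by auto
      next
        case True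
        have "z \<in> V" using inV[OF cg step(2)] by auto
        then show ?thesis using True step(2,5) symE[OF cg] by blast
      qed
    qed
  qed
  then show ?thesis using p w x by blast
qed

lemma main:
  assumes notK: "\<not> graph_iso V E {..<card V} K_edges"
    and bigc: "card V < 2 * twin_number V E"
    and tau: "tau_set V E W"
  shows "twin_number V E \<le> partition_dimension V E
       \<and> real (partition_dimension V E) \<le> (real (card V) + real (twin_number V E)) / 2
       \<and> ((partition_dimension V E = twin_number V E
                \<longleftrightarrow> graph_iso W (induced_edges E W) {..<twin_number V E} coK_edges)
           \<and> ((twin_number V E < partition_dimension V E
                \<and> real (partition_dimension V E) \<le> (real (card V) + real (twin_number V E)) / 2)
                \<longleftrightarrow> graph_iso W (induced_edges E W) {..<twin_number V E} K_edges))"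
proof -
  let ?t = "twin_number V E"
  let ?n = "card V"
  let ?b = "partition_dimension V E"
  have cW: "card W = ?t" and ts: "twin_set V E W" using tau unfolding tau_set_def by auto
  have WsV: "W \<subseteq> V" and tw: "\<forall>u\<in>W. \<forall>v\<in>W. twins E u v" using ts unfolding twin_set_def by auto
  have fW: "finite W" using WsV fin[OF cg] by (rule finite_subset)
  have big: "card V < 2 * card W" using bigc cW by simp
  have irrE: "\<forall>x. \<not> E x x" using irr[OF cg] by auto
  have dich: "(\<forall>x\<in>W. \<forall>y\<in>W. \<not> E x y) \<or> (\<forall>x\<in>W. \<forall>y\<in>W. x \<noteq> y \<longrightarrow> E x y)"
    using dichotomy[OF tw] .
  have WV: "W \<noteq> V"
  proof
    assume WeqV: "W = V"
    show False
    proof (cases "\<forall>x\<in>W. \<forall>y\<in>W. x \<noteq> y \<longrightarrow> E x y")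
      case True
      then have "graph_iso V E {..<card V} K_edges" using iso_K_gen[of W E, OF fW irrE] WeqV by auto
      then show False using notK by simp
    next
      case False
      then obtain x y where xy: "x \<in> W" "y \<in> W" "x \<noteq> y" by auto
      have ind: "\<forall>x\<in>W. \<forall>y\<in>W. \<not> E x y" using dich False by auto
      have "E\<^sup>*\<^sup>* x y" using cg xy WeqV unfolding connected_graph_def by auto
      then show False
      proof (cases rule: converse_rtranclpE)
        case base then show ?thesis using xy by simp
      next
        case (step z)
        then show ?thesis using ind inV[OF cg, of x z] xy WeqV by auto
      qed
    qed
  qed
  have Wne: "W \<noteq> {}" using big by (cases "W = {}") auto
  have cU: "card (V - W) = ?n - ?t" using card_Diff_subset[OF fW WsV] cW by simp
  have tn: "?t \<le> ?n" using card_mono[OF fin[OF cg] WsV] cW by simp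
  have Upos: "card (V - W) \<ge> 1"
  proof -
    have "V - W \<noteq> {}" using WsV WV by auto
    then show ?thesis using fin[OF cg] by (simp add: Suc_leI card_gt_0_iff)
  qed
  have t2: "?t \<ge> 2" using Upos cU big cW by linarith
  obtain x0 y0 where xy0: "x0 \<in> W" "y0 \<in> W" "x0 \<noteq> y0"
  proof -
    obtain x0 where "x0 \<in> W" using Wne by auto
    moreover have "W \<noteq> {x0}" using t2 cW by auto
    ultimately have "W - {x0} \<noteq> {}" by auto
    then show thesis using that \<open>x0 \<in> W\<close> by blast
  qed
  define Q where "Q k \<longleftrightarrow> (\<exists>P. length P = k \<and> locating_partition V E P)" for k
  have bdef: "?b = (LEAST k. Q k)" unfolding partition_dimension_def Q_def by simp
  have lowP: "\<And>P. locating_partition V E P \<Longrightarrow> ?t \<le> length P"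
    using twin_lower[OF cg _ WsV tw] cW by auto
  have exB: "\<exists>B. B \<subseteq> V - W \<and> 2 * card B \<le> card (V - W) \<and> Q (card W + card B)
     \<and> ((\<forall>x\<in>W. \<forall>y\<in>W. \<not> E x y) \<longrightarrow> B = {})"
  proof (cases "\<forall>x\<in>W. \<forall>y\<in>W. \<not> E x y")
    case True
    then show ?thesis using upper[OF cg tau WV big, of "{}"] unfolding Q_def by auto
  next
    case False
    then have cl: "\<forall>x\<in>W. \<forall>y\<in>W. x \<noteq> y \<longrightarrow> E x y" using dich by auto
    obtain B where B: "B \<subseteq> V - W" "2 * card B \<le> card (V - W)"
      "\<forall>a\<in>{x\<in>V-W. \<exists>w\<in>W. E w x} - B. \<exists>b\<in>B. wit V E W a b"
      using domination[OF cg tau WV big cl] by blast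
    then show ?thesis using upper[OF cg tau WV big B(1)] cl False unfolding Q_def by blast
  qed
  then obtain B where B: "B \<subseteq> V - W" "2 * card B \<le> card (V - W)" "Q (card W + card B)"
    "(\<forall>x\<in>W. \<forall>y\<in>W. \<not> E x y) \<longrightarrow> B = {}" by blast
  have Qb: "Q ?b" using B(3) bdef by (metis LeastI)
  have ble: "?b \<le> card W + card B" using B(3) bdef by (metis Least_le)
  obtain P0 where P0: "length P0 = ?b" "locating_partition V E P0" using Qb unfolding Q_def by auto
  have low: "?t \<le> ?b" using lowP[OF P0(2)] P0(1) by simp
  have upb: "real ?b \<le> (real ?n + real ?t) / 2" using ble B(2) cU cW tn by simp
  have indiff: "(?b = ?t) \<longleftrightarrow> (\<forall>x\<in>W. \<forall>y\<in>W. \<not> E x y)"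
  proof
    assume eq: "?b = ?t"
    show "\<forall>x\<in>W. \<forall>y\<in>W. \<not> E x y"
    proof (rule ccontr)
      assume "\<not> (\<forall>x\<in>W. \<forall>y\<in>W. \<not> E x y)"
      then have cl: "\<forall>x\<in>W. \<forall>y\<in>W. x \<noteq> y \<longrightarrow> E x y" using dich by auto
      obtain v w where vw: "v \<in> V - W" "w \<in> W" "E v w" using crossing[OF WsV Wne WV] by auto
      have "card W \<noteq> length P0" using clique_lower[OF cg P0(2) WsV tw cl, of v w] vw by auto
      then show False using eq P0(1) cW by simp
    qed
  next
    assume ind: "\<forall>x\<in>W. \<forall>y\<in>W. \<not> E x y"
    then show "?b = ?t" using B(4) ble low cW by simp
  qed
  have notboth: "\<not> ((\<forall>x\<in>W. \<forall>y\<in>W. \<not> E x y) \<and> (\<forall>x\<in>W. \<forall>y\<in>W. x \<noteq> y \<longrightarrow> E x y))"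
    using xy0 by blast
  have ie: "\<forall>x\<in>W. \<forall>y\<in>W. induced_edges E W x y = E x y" unfolding induced_edges_def by auto
  have isoco: "graph_iso W (induced_edges E W) {..<?t} coK_edges \<longleftrightarrow> (\<forall>x\<in>W. \<forall>y\<in>W. \<not> E x y)"
  proof
    assume "graph_iso W (induced_edges E W) {..<?t} coK_edges"
    then show "\<forall>x\<in>W. \<forall>y\<in>W. \<not> E x y" using iso_coK_conv ie by metis
  next
    assume "\<forall>x\<in>W. \<forall>y\<in>W. \<not> E x y"
    then show "graph_iso W (induced_edges E W) {..<?t} coK_edges"
      using iso_coK_gen[OF fW, of "induced_edges E W"] ie cW by auto
  qed
  have isoK: "graph_iso W (induced_edges E W) {..<?t} K_edges \<longleftrightarrow> (\<forall>x\<in>W. \<forall>y\<in>W. x \<noteq> y \<longrightarrow> E x y)"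
  proof
    assume "graph_iso W (induced_edges E W) {..<?t} K_edges"
    then show "\<forall>x\<in>W. \<forall>y\<in>W. x \<noteq> y \<longrightarrow> E x y" using iso_K_conv ie by metis
  next
    assume "\<forall>x\<in>W. \<forall>y\<in>W. x \<noteq> y \<longrightarrow> E x y"
    moreover have "\<forall>x. \<not> induced_edges E W x x" using irrE unfolding induced_edges_def by auto
    ultimately show "graph_iso W (induced_edges E W) {..<?t} K_edges"
      using iso_K_gen[OF fW, of "induced_edges E W"] ie cW by auto
  qed
  show ?thesis using low upb indiff isoco isoK dich notboth by auto
qed

end

theorem theorem18:
  fixes V :: "'a set" and E :: "'a \<Rightarrow> 'a \<Rightarrow> bool"
  assumes "connected_graph V E"
    and "\<not> graph_iso V E {..<card V} K_edges"
    and "real (twin_number V E) > real (card V) / 2"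
  shows "twin_number V E \<le> partition_dimension V E
       \<and> real (partition_dimension V E) \<le> (real (card V) + real (twin_number V E)) / 2
       \<and> (\<forall>W. tau_set V E W \<longrightarrow>
            ((partition_dimension V E = twin_number V E
                \<longleftrightarrow> graph_iso W (induced_edges E W) {..<twin_number V E} coK_edges)
           \<and> ((twin_number V E < partition_dimension V E
                \<and> real (partition_dimension V E) \<le> (real (card V) + real (twin_number V E)) / 2)
                \<longleftrightarrow> graph_iso W (induced_edges E W) {..<twin_number V E} K_edges)))"
proof -
  have bigc: "card V < 2 * twin_number V E" using assms(3) by linarith
  obtain W0 where W0: "tau_set V E W0" using tau_exists[OF assms(1)] by auto
  show ?thesis using main[OF assms(1,2) bigc] W0 by blast
qed



end
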